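(* Let $X$ be a normed space and let $Y$ be a weakly sequentially complete Banach space ordered by a closed convex normal cone $K\subset Y$. Let $\alpha:\mathbb{R}_+\to\mathbb{R}_+$ be nondecreasing with $\lim_{t\to0^+}\alpha(t)/t=0$. Let $A\subset X$ be convex, let $k_0\in K\setminus\{0\}$, and let $F:X\to Y$ be strongly $\alpha(\cdot)$-$k_0$ paraconvex on $A$ with constant $C\ge 0$. Let $x_0\in A$ and $h\in X$ with $\|h\|=1$ be such that there is $\delta_0>0$ with $x_0+th\in A$ for all $t\in(-\delta_0,\delta_0)$. Then the directional derivative $$F'(x_0;h):=\lim_{t\to0^+}\frac{F(x_0+th)-F(x_0)}{t}$$ exists, the limit being taken in the norm topology of $Y$.
   Context: For a convex cone $K\subset Y$, write $x\le_K y$ iff $y-x\in K$. A cone $K$ in a normed space $Y$ is normal if there is a constant $c>0$ such that $0\le_K x\le_K y$ implies $\|x\|\le c\|y\|$. A mapping $F:X\to Y$ is strongly $\alpha(\cdot)$-$k_0$ paraconvex on a convex set $A\subset X$ with constant $C\ge0$ (where $k_0\in K$) if for all $x_1,x_2\in A$ and all $\lambda\in[0,1]$, $$F(\lambda x_1+(1-\lambda)x_2)\le_K \lambda F(x_1)+(1-\lambda)F(x_2)+C\min\{\lambda,1-\lambda\}\,\alpha(\|x_1-x_2\|)\,k_0.$$ *)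

theory Defs
  imports "HOL-Analysis.Analysis"
begin

definition cone_le :: "'b::real_vector set \<Rightarrow> 'b \<Rightarrow> 'b \<Rightarrow> bool" where
  "cone_le K x y \<longleftrightarrow> y - x \<in> K"

definition normal_cone :: "'b::real_normed_vector set \<Rightarrow> bool" where
  "normal_cone K \<longleftrightarrow> (\<exists>c>0. \<forall>x y. cone_le K 0 x \<and> cone_le K x y \<longrightarrow> norm x \<le> c * norm y)"

definition weakly_Cauchy :: "(nat \<Rightarrow> 'b::real_normed_vector) \<Rightarrow> bool" where
  "weakly_Cauchy u \<longleftrightarrow> (\<forall>f::'b \<Rightarrow> real. bounded_linear f \<longrightarrow> Cauchy (\<lambda>n. f (u n)))"

definition weakly_converges_to :: "(nat \<Rightarrow> 'b::real_normed_vector) \<Rightarrow> 'b \<Rightarrow> bool" where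
  "weakly_converges_to u y \<longleftrightarrow> (\<forall>f::'b \<Rightarrow> real. bounded_linear f \<longrightarrow> (\<lambda>n. f (u n)) \<longlonglongrightarrow> f y)"

definition weakly_sequentially_complete :: "'b::real_normed_vector itself \<Rightarrow> bool" where
  "weakly_sequentially_complete TYPE('b) \<longleftrightarrow>
     (\<forall>u::nat \<Rightarrow> 'b. weakly_Cauchy u \<longrightarrow> (\<exists>y. weakly_converges_to u y))"

definition strongly_paraconvex ::
  "'b::real_normed_vector set \<Rightarrow> (real \<Rightarrow> real) \<Rightarrow> 'b \<Rightarrow> real \<Rightarrow> 'a::real_normed_vector set \<Rightarrow> ('a \<Rightarrow> 'b) \<Rightarrow> bool" where
  "strongly_paraconvex K \<alpha> k0 C A F \<longleftrightarrow>
     (\<forall>x1\<in>A. \<forall>x2\<in>A. \<forall>l\<in>{0..1}.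
        cone_le K (F (l *\<^sub>R x1 + (1 - l) *\<^sub>R x2))
          (l *\<^sub>R F x1 + (1 - l) *\<^sub>R F x2 + (C * min l (1 - l) * \<alpha> (norm (x1 - x2))) *\<^sub>R k0))"

end

theory Submission
  imports Defs
begin
definition goodG :: "('b::real_vector \<Rightarrow> real) \<Rightarrow> ('b \<times> real) set \<Rightarrow> bool" where
 "goodG p G \<longleftrightarrow> (0,0) \<in> G \<and> (\<forall>u\<in>G. \<forall>v\<in>G. u+v \<in> G) \<and> (\<forall>c. \<forall>u\<in>G. c *\<^sub>R u \<in> G)
    \<and> (\<forall>x a b. (x,a)\<in>G \<longrightarrow> (x,b)\<in>G \<longrightarrow> a = b) \<and> (\<forall>x a. (x,a)\<in>G \<longrightarrow> a \<le> p x)"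

lemma hb_step:
  fixes p :: "'b::real_vector \<Rightarrow> real"
  assumes G: "goodG p G" and sub: "\<And>x y. p (x+y) \<le> p x + p y"
    and hom: "\<And>s x. s > 0 \<Longrightarrow> p (s *\<^sub>R x) = s * p x" and x: "\<forall>a. (x,a) \<notin> G"
  shows "\<exists>G'. goodG p G' \<and> G \<subseteq> G' \<and> G' \<noteq> G"
proof -
  have G0: "(0,0) \<in> G" and Gadd: "\<And>u v. u\<in>G \<Longrightarrow> v\<in>G \<Longrightarrow> u+v\<in>G"
    and Gsc: "\<And>c u. u\<in>G \<Longrightarrow> c *\<^sub>R u \<in> G"
    and Gfun: "\<And>x a b. (x,a)\<in>G \<Longrightarrow> (x,b)\<in>G \<Longrightarrow> a = b"
    and Gdom: "\<And>x a. (x,a)\<in>G \<Longrightarrow> a \<le> p x" using G unfolding goodG_def by blast+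
  have Gsc': "\<And>c m a. (m,a)\<in>G \<Longrightarrow> (c *\<^sub>R m, c * a) \<in> G"
    using Gsc by fastforce
  have Gadd': "\<And>m a m' a'. (m,a)\<in>G \<Longrightarrow> (m',a')\<in>G \<Longrightarrow> (m + m', a + a') \<in> G"
    using Gadd by fastforce
  have le: "a - p (m - x) \<le> p (m' + x) - a'" if "(m,a)\<in>G" "(m',a')\<in>G" for m a m' a'
  proof -
    have "a + a' \<le> p (m + m')" using Gdom[OF Gadd'[OF that]] .
    also have "m + m' = (m - x) + (m' + x)" by simp
    finally show ?thesis using sub[of "m - x" "m' + x"] by linarith
  qed
  define Lo where "Lo = {a - p (m - x) | m a. (m,a) \<in> G}"
  define c where "c = Sup Lo"
  have ne: "Lo \<noteq> {}" using G0 unfolding Lo_def by blast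
  have bdd: "bdd_above Lo" unfolding Lo_def bdd_above_def using le[OF _ G0] by force
  have c1: "a - p (m - x) \<le> c" if "(m,a)\<in>G" for m a
    unfolding c_def by (rule cSup_upper[OF _ bdd]) (use that Lo_def in blast)
  have c2: "c \<le> p (m + x) - a" if "(m,a)\<in>G" for m a
    unfolding c_def by (rule cSup_least[OF ne]) (use that le Lo_def in blast)
  define G' where "G' = {(m + t *\<^sub>R x, a + t * c) | m a t. (m,a) \<in> G}"
  have dom: "a + t * c \<le> p (m + t *\<^sub>R x)" if ma: "(m,a)\<in>G" for m a t
  proof (cases "t > 0")
    case True
    have "c \<le> p ((1/t) *\<^sub>R m + x) - (1/t) * a" using c2[OF Gsc'[OF ma, of "1/t"]] .
    moreover have "p (m + t *\<^sub>R x) = t * p ((1/t) *\<^sub>R m + x)"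
    proof -
      have "m + t *\<^sub>R x = t *\<^sub>R ((1/t) *\<^sub>R m + x)" using True by (simp add: scaleR_add_right)
      then show ?thesis using hom[OF True] by simp
    qed
    ultimately have "t * c \<le> t * (p ((1/t) *\<^sub>R m + x) - (1/t) * a)"
      using True by (simp add: mult_left_mono)
    then show ?thesis using True \<open>p (m + t *\<^sub>R x) = _\<close> by (simp add: right_diff_distrib)
  next
    case False
    show ?thesis
    proof (cases "t = 0")
      case True then show ?thesis using Gdom[OF ma] by simp
    next
      case False
      define s where "s = - t"
      have s: "s > 0" using False \<open>\<not> t > 0\<close> s_def by simp
      have "(1/s) * a - p ((1/s) *\<^sub>R m - x) \<le> c" using c1[OF Gsc'[OF ma, of "1/s"]] .
      moreover have "p (m + t *\<^sub>R x) = s * p ((1/s) *\<^sub>R m - x)"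
      proof -
        have "m + t *\<^sub>R x = s *\<^sub>R ((1/s) *\<^sub>R m - x)" using s by (simp add: s_def scaleR_diff_right)
        then show ?thesis using hom[OF s] by simp
      qed
      ultimately have "s * ((1/s) * a - p ((1/s) *\<^sub>R m - x)) \<le> s * c"
        using s by (simp add: mult_left_mono)
      then show ?thesis using s \<open>p (m + t *\<^sub>R x) = _\<close> by (simp add: s_def right_diff_distrib)
    qed
  qed
  have gG': "goodG p G'"
    unfolding goodG_def
  proof (intro conjI ballI allI impI)
    show "(0,0) \<in> G'" unfolding G'_def using G0 by force
  next
    fix u v assume "u \<in> G'" "v \<in> G'"
    then obtain m a t m' a' t' where u: "u = (m + t *\<^sub>R x, a + t * c)" "(m,a)\<in>G"
      and v: "v = (m' + t' *\<^sub>R x, a' + t' * c)" "(m',a')\<in>G" unfolding G'_def by blast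
    have "u + v = ((m+m') + (t+t') *\<^sub>R x, (a+a') + (t+t') * c)"
      using u v by (simp add: algebra_simps scaleR_add_left)
    then show "u + v \<in> G'" unfolding G'_def using Gadd'[OF u(2) v(2)] by blast
  next
    fix r u assume "u \<in> G'"
    then obtain m a t where u: "u = (m + t *\<^sub>R x, a + t * c)" "(m,a)\<in>G" unfolding G'_def by blast
    have "r *\<^sub>R u = (r *\<^sub>R m + (r*t) *\<^sub>R x, r * a + (r*t) * c)"
      using u by (simp add: algebra_simps scaleR_add_right)
    then show "r *\<^sub>R u \<in> G'" unfolding G'_def using Gsc'[OF u(2)] by blast
  next
    fix y b1 b2 assume "(y,b1) \<in> G'" "(y,b2) \<in> G'"
    then obtain m a t m' a' t' where u: "y = m + t *\<^sub>R x" "b1 = a + t * c" "(m,a)\<in>G"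
      and v: "y = m' + t' *\<^sub>R x" "b2 = a' + t' * c" "(m',a')\<in>G" unfolding G'_def by blast
    have tt: "t = t'"
    proof (rule ccontr)
      assume ne: "t \<noteq> t'"
      have "(m' - m, a' - a) \<in> G" using Gadd'[OF v(3) Gsc'[OF u(3), of "-1"]] by simp
      from Gsc'[OF this, of "1/(t - t')"]
      have "((1/(t-t')) *\<^sub>R (m' - m), (1/(t-t')) * (a' - a)) \<in> G" .
      moreover have "(1/(t-t')) *\<^sub>R (m' - m) = x"
      proof -
        have "m' - m = (t - t') *\<^sub>R x" using u(1) v(1) by (simp add: algebra_simps scaleR_diff_left)
        then show ?thesis using ne by simp
      qed
      ultimately show False using x by metis
    qed
    then have "m = m'" using u(1) v(1) by simp
    then have "a = a'" using Gfun u(3) v(3) by blast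
    then show "b1 = b2" using u v tt by simp
  next
    fix y b assume "(y,b) \<in> G'"
    then obtain m a t where "y = m + t *\<^sub>R x" "b = a + t * c" "(m,a)\<in>G" unfolding G'_def by blast
    then show "b \<le> p y" using dom by simp
  qed
  have sub1: "G \<subseteq> G'"
  proof
    fix u assume "u \<in> G"
    moreover obtain m a where "u = (m,a)" by force
    ultimately show "u \<in> G'" unfolding G'_def by force
  qed
  have "(x, c) \<in> G'" unfolding G'_def using G0 by force
  then have "G' \<noteq> G" using x by blast
  then show ?thesis using gG' sub1 by blast
qed

lemma goodG_D:
  assumes "goodG p G"
  shows "(0,0) \<in> G" "\<And>u v. u\<in>G \<Longrightarrow> v\<in>G \<Longrightarrow> u+v \<in> G" "\<And>c u. u\<in>G \<Longrightarrow> c *\<^sub>R u \<in> G"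
    "\<And>x a b. (x,a)\<in>G \<Longrightarrow> (x,b)\<in>G \<Longrightarrow> a = b" "\<And>x a. (x,a)\<in>G \<Longrightarrow> a \<le> p x"
  using assms unfolding goodG_def by blast+

lemma goodG_chain:
  assumes C: "C \<in> chains {G. goodG p G \<and> G0 \<subseteq> G}" and ne: "C \<noteq> {}"
  shows "goodG p (\<Union>C) \<and> G0 \<subseteq> \<Union>C"
proof -
  have CA: "\<And>G. G \<in> C \<Longrightarrow> goodG p G" "\<And>G. G \<in> C \<Longrightarrow> G0 \<subseteq> G" using C unfolding chains_def by blast+
  have ch: "\<And>A B. A \<in> C \<Longrightarrow> B \<in> C \<Longrightarrow> A \<subseteq> B \<or> B \<subseteq> A"
    using C unfolding chains_def chain_subset_def by blast
  obtain G1 where G1: "G1 \<in> C" using ne by blast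
  have two: "\<exists>G\<in>C. u \<in> G \<and> v \<in> G" if uv: "u \<in> \<Union>C" "v \<in> \<Union>C" for u v
  proof -
    obtain A B where AB: "A\<in>C" "B\<in>C" "u\<in>A" "v\<in>B" using uv by blast
    show ?thesis using ch[OF AB(1,2)] AB by blast
  qed
  show ?thesis unfolding goodG_def
  proof (intro conjI ballI allI impI)
    show "(0,0) \<in> \<Union>C" using goodG_D(1)[OF CA(1)[OF G1]] G1 by blast
    show "G0 \<subseteq> \<Union>C" using CA(2)[OF G1] G1 by blast
  next
    fix u v assume "u \<in> \<Union>C" "v \<in> \<Union>C"
    then obtain G where "G \<in> C" "u \<in> G" "v \<in> G" using two by blast
    then show "u + v \<in> \<Union>C" using goodG_D(2)[OF CA(1)] by blast
  next
    fix c u assume "u \<in> \<Union>C"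
    then obtain G where "G \<in> C" "u \<in> G" by blast
    then show "c *\<^sub>R u \<in> \<Union>C" using goodG_D(3)[OF CA(1)] by blast
  next
    fix x a b assume "(x,a) \<in> \<Union>C" "(x,b) \<in> \<Union>C"
    then obtain G where "G \<in> C" "(x,a) \<in> G" "(x,b) \<in> G" using two by blast
    then show "a = b" using goodG_D(4)[OF CA(1)] by blast
  next
    fix x a assume "(x,a) \<in> \<Union>C"
    then obtain G where "G \<in> C" "(x,a) \<in> G" by blast
    then show "a \<le> p x" using goodG_D(5)[OF CA(1)] by blast
  qed
qed

lemma hahn_banach:
  fixes p :: "'b::real_vector \<Rightarrow> real"
  assumes sub: "\<And>x y. p (x+y) \<le> p x + p y"
    and hom: "\<And>s x. s > 0 \<Longrightarrow> p (s *\<^sub>R x) = s * p x" and nn: "\<And>x. p x \<ge> 0"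
  shows "\<exists>f. (\<forall>x y. f (x+y) = f x + f y) \<and> (\<forall>r x. f (r *\<^sub>R x) = r * f x) \<and> (\<forall>x. f x \<le> p x) \<and> f x0 = p x0"
proof -
  have p0: "p 0 = 0" using hom[of 2 0] by simp
  define G0 where "G0 = {(t *\<^sub>R x0, t * p x0) | t. True}"
  have gG0: "goodG p G0" unfolding goodG_def
  proof (intro conjI ballI allI impI)
    show "(0,0) \<in> G0" unfolding G0_def by (rule CollectI, rule exI[of _ 0]) simp
  next
    fix u v assume "u \<in> G0" "v \<in> G0"
    then obtain t t' where "u = (t *\<^sub>R x0, t * p x0)" "v = (t' *\<^sub>R x0, t' * p x0)" unfolding G0_def by blast
    then have "u + v = ((t+t') *\<^sub>R x0, (t+t') * p x0)" by (simp add: algebra_simps)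
    then show "u + v \<in> G0" unfolding G0_def by blast
  next
    fix c u assume "u \<in> G0"
    then obtain t where "u = (t *\<^sub>R x0, t * p x0)" unfolding G0_def by blast
    then have "c *\<^sub>R u = ((c*t) *\<^sub>R x0, (c*t) * p x0)" by (simp add: algebra_simps)
    then show "c *\<^sub>R u \<in> G0" unfolding G0_def by blast
  next
    fix x a b assume "(x,a) \<in> G0" "(x,b) \<in> G0"
    then obtain t t' where "x = t *\<^sub>R x0" "a = t * p x0" "x = t' *\<^sub>R x0" "b = t' * p x0" unfolding G0_def by blast
    then show "a = b" by (cases "x0 = 0") (auto simp: p0)
  next
    fix x a assume "(x,a) \<in> G0"
    then obtain t where xa: "x = t *\<^sub>R x0" "a = t * p x0" unfolding G0_def by blast
    show "a \<le> p x"
    proof (cases "t > 0")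
      case True then show ?thesis using xa hom by simp
    next
      case False
      have "p 0 \<le> p x0 + p (-x0)" using sub[of x0 "-x0"] by simp
      then have m: "- p x0 \<le> p (-x0)" using p0 by simp
      show ?thesis
      proof (cases "t = 0")
        case True then show ?thesis using xa nn by simp
      next
        case False
        then have s: "-t > 0" using \<open>\<not> t > 0\<close> by simp
        have "x = (-t) *\<^sub>R (-x0)" using xa by simp
        then have "p x = (-t) * p (-x0)" using hom[OF s, of "-x0"] by simp
        moreover have "(-t) * (- p x0) \<le> (-t) * p (-x0)" using m s using mult_left_mono[OF m, of "-t"] by simp
        ultimately show ?thesis using xa by simp
      qed
    qed
  qed
  define A where "A = {G. goodG p G \<and> G0 \<subseteq> G}"
  have "\<forall>C\<in>chains A. \<exists>U\<in>A. \<forall>X\<in>C. X \<subseteq> U"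
  proof
    fix C assume C: "C \<in> chains A"
    show "\<exists>U\<in>A. \<forall>X\<in>C. X \<subseteq> U"
    proof (cases "C = {}")
      case True then show ?thesis using gG0 unfolding A_def by blast
    next
      case False
      then have "\<Union>C \<in> A" using goodG_chain[of C p G0] C unfolding A_def by blast
      then show ?thesis by blast
    qed
  qed
  from Zorn_Lemma2[OF this] obtain M where M: "M \<in> A" and max: "\<And>X. X \<in> A \<Longrightarrow> M \<subseteq> X \<Longrightarrow> X = M" by blast
  have gM: "goodG p M" and G0M: "G0 \<subseteq> M" using M unfolding A_def by auto
  have tot: "\<exists>a. (y,a) \<in> M" for y
  proof (rule ccontr)
    assume "\<not> ?thesis"
    then obtain G' where "goodG p G'" "M \<subseteq> G'" "G' \<noteq> M" using hb_step[OF gM sub hom] by blast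
    then show False using max[of G'] G0M unfolding A_def by blast
  qed
  note Mfun = goodG_D(4)[OF gM]
  define f where "f y = (THE a. (y,a) \<in> M)" for y
  have fM: "(y, f y) \<in> M" for y
  proof -
    obtain a where "(y,a)\<in>M" using tot by blast
    then have "\<exists>!a. (y,a) \<in> M" using Mfun by blast
    then show ?thesis unfolding f_def by (rule theI')
  qed
  have fv: "(y,a) \<in> M \<Longrightarrow> f y = a" for y a using Mfun fM by blast
  have "f (x+y) = f x + f y" for x y
  proof -
    have "(x, f x) + (y, f y) \<in> M" using goodG_D(2)[OF gM] fM by blast
    then show ?thesis using fv by simp
  qed
  moreover have "f (r *\<^sub>R x) = r * f x" for r x
  proof -
    have "r *\<^sub>R (x, f x) \<in> M" using goodG_D(3)[OF gM] fM by blast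
    then show ?thesis using fv by simp
  qed
  moreover have "f x \<le> p x" for x using goodG_D(5)[OF gM] fM by blast
  moreover have "f x0 = p x0"
  proof -
    have "(x0, p x0) \<in> G0" unfolding G0_def by (rule CollectI, rule exI[of _ 1]) simp
    then show ?thesis using fv G0M by blast
  qed
  ultimately show ?thesis by blast
qed

lemma separation:
  fixes C :: "'b::real_normed_vector set"
  assumes cvx: "convex C" and cl: "closed C" and n0: "0 \<notin> C" and c0: "c0 \<in> C"
  shows "\<exists>f::'b\<Rightarrow>real. \<exists>\<theta>. bounded_linear f \<and> \<theta> > 0 \<and> (\<forall>c\<in>C. f c \<le> -\<theta>)"
proof -
  obtain d where d: "d > 0" "\<And>c. c \<in> C \<Longrightarrow> d \<le> norm c"
  proof -
    have "open (- C)" using cl by (simp add: open_Compl)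
    then obtain e where e: "e > 0" "ball 0 e \<subseteq> - C" using n0 open_contains_ball by blast
    have "e \<le> norm c" if "c \<in> C" for c
      using e that by (force simp: ball_def dist_norm)
    then show ?thesis using that e by blast
  qed
  define r where "r = d/2"
  have r: "r > 0" "r < d" using d r_def by auto
  define V where "V = {c - c0 + w | c w. c \<in> C \<and> norm w < r}"
  define T where "T z = {t. t > 0 \<and> (\<exists>v\<in>V. z = t *\<^sub>R v)}" for z
  define \<mu> where "\<mu> z = Inf (T z)" for z
  have Tmem: "t \<in> T z" if "t > 0" "norm z < t * r" for t z
  proof -
    have "norm ((1/t) *\<^sub>R z) < r" using that by (simp add: field_simps)
    then have "c0 - c0 + (1/t) *\<^sub>R z \<in> V" unfolding V_def using c0 by blast
    moreover have "z = t *\<^sub>R (c0 - c0 + (1/t) *\<^sub>R z)" using that by simp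
    ultimately show ?thesis unfolding T_def using that by blast
  qed
  have Tne: "T z \<noteq> {}" for z
  proof -
    have "norm z / r + 1 > 0" using r by (simp add: add_nonneg_pos)
    moreover have "norm z < (norm z / r + 1) * r" using r by (simp add: field_simps)
    ultimately show ?thesis using Tmem by blast
  qed
  have Tbdd: "bdd_below (T z)" for z unfolding T_def bdd_below_def by (rule exI[of _ 0]) auto
  have Tpos: "t \<in> T z \<Longrightarrow> t > 0" for t z unfolding T_def by blast
  have mu_lower: "t \<in> T z \<Longrightarrow> \<mu> z \<le> t" for t z unfolding \<mu>_def by (rule cInf_lower[OF _ Tbdd])
  have mu_greatest: "(\<And>t. t \<in> T z \<Longrightarrow> y \<le> t) \<Longrightarrow> y \<le> \<mu> z" for y z
    unfolding \<mu>_def by (rule cInf_greatest[OF Tne])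
  have mu_nn: "\<mu> z \<ge> 0" for z by (rule mu_greatest) (use Tpos in force)
  have mu_le: "\<mu> z \<le> norm z / r" for z
  proof (rule dense_ge)
    fix y assume y: "norm z / r < y"
    then have "y > 0" using r by (smt (verit) divide_nonneg_pos norm_ge_zero)
    moreover have "norm z < y * r" using y r by (simp add: field_simps)
    ultimately show "\<mu> z \<le> y" using Tmem mu_lower by blast
  qed
  have mu_sc: "\<mu> (s *\<^sub>R z) \<le> s * \<mu> z" if s: "s > 0" for s z
  proof -
    have "\<mu> (s *\<^sub>R z) / s \<le> \<mu> z"
    proof (rule mu_greatest)
      fix t assume t: "t \<in> T z"
      then obtain v where "v \<in> V" "z = t *\<^sub>R v" "t > 0" unfolding T_def by blast
      then have "s * t \<in> T (s *\<^sub>R z)" unfolding T_def using s by auto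
      then have "\<mu> (s *\<^sub>R z) \<le> s * t" by (rule mu_lower)
      then show "\<mu> (s *\<^sub>R z) / s \<le> t" using s by (simp add: field_simps)
    qed
    then show ?thesis using s by (simp add: field_simps)
  qed
  have hom: "\<mu> (s *\<^sub>R z) = s * \<mu> z" if s: "s > 0" for s z
  proof -
    have "\<mu> z = \<mu> ((1/s) *\<^sub>R (s *\<^sub>R z))" using s by simp
    also have "\<dots> \<le> (1/s) * \<mu> (s *\<^sub>R z)" using s by (intro mu_sc) simp
    finally have "s * \<mu> z \<le> \<mu> (s *\<^sub>R z)" using s by (simp add: field_simps)
    then show ?thesis using mu_sc[OF s, of z] by linarith
  qed
  have Tadd: "t1 + t2 \<in> T (z1 + z2)" if tt: "t1 \<in> T z1" "t2 \<in> T z2" for t1 t2 z1 z2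
  proof -
    obtain c1 w1 where 1: "t1 > 0" "z1 = t1 *\<^sub>R (c1 - c0 + w1)" "c1 \<in> C" "norm w1 < r"
      using tt(1) unfolding T_def V_def by blast
    obtain c2 w2 where 2: "t2 > 0" "z2 = t2 *\<^sub>R (c2 - c0 + w2)" "c2 \<in> C" "norm w2 < r"
      using tt(2) unfolding T_def V_def by blast
    define l where "l = t1 / (t1 + t2)"
    have l: "0 < l" "l < 1" "1 - l = t2 / (t1+t2)" using 1 2 by (auto simp: l_def field_simps)
    have cC: "l *\<^sub>R c1 + (1 - l) *\<^sub>R c2 \<in> C"
      using cvx 1(3) 2(3) l by (simp add: convex_def)
    have "norm (l *\<^sub>R w1 + (1 - l) *\<^sub>R w2) \<le> l * norm w1 + (1 - l) * norm w2"
      using l by (smt (verit) norm_scaleR norm_triangle_ineq)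
    also have "\<dots> < l * r + (1 - l) * r"
      using l 1(4) 2(4) by (intro add_less_le_mono mult_strict_left_mono mult_left_mono) auto
    also have "\<dots> = r" by (simp add: algebra_simps)
    finally have wn: "norm (l *\<^sub>R w1 + (1 - l) *\<^sub>R w2) < r" .
    have "z1 + z2 = (t1 + t2) *\<^sub>R ((l *\<^sub>R c1 + (1 - l) *\<^sub>R c2) - c0 + (l *\<^sub>R w1 + (1 - l) *\<^sub>R w2))"
    proof -
      have e: "(t1 + t2) * l = t1" "(t1 + t2) * (1 - l) = t2" using 1 2 l by (auto simp: l_def field_simps)
      have "(t1 + t2) *\<^sub>R ((l *\<^sub>R c1 + (1 - l) *\<^sub>R c2) - c0 + (l *\<^sub>R w1 + (1 - l) *\<^sub>R w2))
          = ((t1+t2)*l) *\<^sub>R c1 + ((t1+t2)*(1-l)) *\<^sub>R c2 - (t1+t2) *\<^sub>R c0 + ((t1+t2)*l) *\<^sub>R w1 + ((t1+t2)*(1-l)) *\<^sub>R w2"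
        by (simp only: scaleR_add_right scaleR_diff_right scaleR_scaleR) (simp add: algebra_simps)
      also have "\<dots> = t1 *\<^sub>R c1 + t2 *\<^sub>R c2 - (t1+t2) *\<^sub>R c0 + t1 *\<^sub>R w1 + t2 *\<^sub>R w2" by (simp only: e)
      also have "\<dots> = z1 + z2" by (simp add: 1(2) 2(2) algebra_simps)
      finally show ?thesis by simp
    qed
    moreover have "(l *\<^sub>R c1 + (1 - l) *\<^sub>R c2) - c0 + (l *\<^sub>R w1 + (1 - l) *\<^sub>R w2) \<in> V"
      unfolding V_def using cC wn by blast
    moreover have "t1 + t2 > 0" using 1 2 by simp
    ultimately show ?thesis unfolding T_def by blast
  qed
  have sub: "\<mu> (z1 + z2) \<le> \<mu> z1 + \<mu> z2" for z1 z2
  proof -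
    have "\<mu> (z1 + z2) - \<mu> z1 \<le> \<mu> z2"
    proof (rule mu_greatest)
      fix t2 assume t2: "t2 \<in> T z2"
      have "\<mu> (z1 + z2) - t2 \<le> \<mu> z1"
      proof (rule mu_greatest)
        fix t1 assume "t1 \<in> T z1"
        then show "\<mu> (z1 + z2) - t2 \<le> t1" using mu_lower[OF Tadd[OF _ t2]] by force
      qed
      then show "\<mu> (z1 + z2) - \<mu> z1 \<le> t2" by simp
    qed
    then show ?thesis by simp
  qed
  have muV: "v \<in> V \<Longrightarrow> \<mu> v \<le> 1" for v by (rule mu_lower) (simp add: T_def)
  have muc0: "\<mu> (- c0) \<ge> 1"
  proof (rule mu_greatest, rule ccontr)
    fix t assume t: "t \<in> T (- c0)" "\<not> 1 \<le> t"
    then obtain c w where cw: "t > 0" "- c0 = t *\<^sub>R (c - c0 + w)" "c \<in> C" "norm w < r"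
      unfolding T_def V_def by blast
    have inC: "t *\<^sub>R c + (1 - t) *\<^sub>R c0 \<in> C" using cvx cw t c0 by (simp add: convex_def)
    have "t *\<^sub>R c + (1 - t) *\<^sub>R c0 = - (t *\<^sub>R w)" using cw(2)
      by (simp add: algebra_simps scaleR_diff_left)
    then have "norm (t *\<^sub>R c + (1 - t) *\<^sub>R c0) = t * norm w" using cw by simp
    also have "\<dots> < d" using cw t r
      by (smt (verit) mult_left_le_one_le norm_ge_zero)
    finally show False using d(2)[OF inC] by simp
  qed
  obtain f where f: "\<And>x y. f (x+y) = f x + f y" "\<And>r x. f (r *\<^sub>R x) = r * f x"
      "\<And>x. f x \<le> \<mu> x" "f (- c0) = \<mu> (- c0)"
    using hahn_banach[of \<mu> "- c0", OF sub hom mu_nn] by blast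
  have fneg: "f (- x) = - f x" for x using f(2)[of "-1" x] by simp
  have bl: "bounded_linear f"
  proof (rule bounded_linear_intro[where K = "1/r"])
    show "f (x + y) = f x + f y" for x y by (rule f(1))
    show "f (s *\<^sub>R x) = s *\<^sub>R f x" for s x using f(2) by simp
    show "norm (f x) \<le> norm x * (1/r)" for x
    proof -
      have "f x \<le> norm x / r" using f(3) mu_le order_trans by blast
      moreover have "- f x \<le> norm x / r" using f(3)[of "-x"] mu_le[of "-x"] fneg by simp
      ultimately show ?thesis by (simp add: abs_le_iff)
    qed
  qed
  have c0n: "c0 \<noteq> 0" using c0 n0 by blast
  define \<theta> where "\<theta> = r / (2 * norm c0)"
  have th: "\<theta> > 0" using r c0n by (simp add: \<theta>_def)
  have "f c \<le> - \<theta>" if c: "c \<in> C" for c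
  proof -
    have "norm ((-\<theta>) *\<^sub>R c0) = r/2" using c0n r by (simp add: \<theta>_def)
    then have "norm ((-\<theta>) *\<^sub>R c0) < r" using r by simp
    then have "c - c0 + (-\<theta>) *\<^sub>R c0 \<in> V" unfolding V_def using c by blast
    then have "f (c - c0 + (-\<theta>) *\<^sub>R c0) \<le> 1" using muV f(3) order_trans by blast
    moreover have "f (c - c0 + (-\<theta>) *\<^sub>R c0) = f c + (1 + \<theta>) * f (- c0)"
    proof -
      have "c - c0 + (-\<theta>) *\<^sub>R c0 = c + (1 + \<theta>) *\<^sub>R (- c0)" by (simp add: algebra_simps)
      then show ?thesis by (simp only: f(1) f(2))
    qed
    moreover have "(1 + \<theta>) * f (- c0) \<ge> 1 + \<theta>" using f(4) muc0 th by simp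
    ultimately show ?thesis by linarith
  qed
  then show ?thesis using bl th by blast
qed

lemma sep_point:
  fixes S :: "'b::real_normed_vector set"
  assumes "convex S" "closed S" "y \<notin> S" "s0 \<in> S"
  shows "\<exists>f::'b\<Rightarrow>real. \<exists>\<theta>. bounded_linear f \<and> \<theta> > 0 \<and> (\<forall>s\<in>S. f s \<le> f y - \<theta>)"
proof -
  let ?C = "(\<lambda>s. s - y) ` S"
  have "convex ?C" using assms(1) by simp
  moreover have "closed ?C" using assms(2) by (rule closed_translation_subtract)
  moreover have "0 \<notin> ?C" using assms(3) by auto
  moreover have "s0 - y \<in> ?C" using assms(4) by blast
  ultimately obtain f :: "'b\<Rightarrow>real" and \<theta> where f: "bounded_linear f" "\<theta> > 0" "\<forall>c\<in>?C. f c \<le> -\<theta>"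
    using separation by blast
  have "f s \<le> f y - \<theta>" if "s \<in> S" for s
    using f(3) that linear_diff[OF bounded_linear.linear[OF f(1)]] by force
  then show ?thesis using f by blast
qed

lemma K_add:
  assumes "cone K" "convex K" "x \<in> K" "y \<in> K"
  shows "x + y \<in> K"
proof -
  have "(1/2) *\<^sub>R x + (1/2) *\<^sub>R y \<in> K" using assms(2-4) unfolding convex_def by auto
  then have "2 *\<^sub>R ((1/2) *\<^sub>R x + (1/2) *\<^sub>R y) \<in> K" using assms(1) unfolding cone_def by auto
  then show ?thesis by (simp add: scaleR_add_right)
qed

lemma K_sum:
  assumes "cone K" "convex K" "0 \<in> K" "\<And>i. i \<in> I \<Longrightarrow> d i \<in> K"
  shows "sum d I \<in> K"
  using assms(4)
proof (induction I rule: infinite_finite_induct)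
  case (infinite A) then show ?case using assms(3) by simp
next
  case empty then show ?case using assms(3) by simp
next
  case (insert x F) then show ?case using K_add[OF assms(1,2)] by simp
qed

lemma regular:
  fixes u :: "nat \<Rightarrow> 'b::banach" and K :: "'b set"
  assumes wsc: "weakly_sequentially_complete TYPE('b)"
    and cK: "cone K" and vK: "convex K" and clK: "closed K" and nK: "normal_cone K" and K0: "0 \<in> K"
    and mono: "\<And>n. u (Suc n) - u n \<in> K" and bnd: "\<And>n. B - u n \<in> K"
  shows "\<exists>L. u \<longlonglongrightarrow> L"
proof -
  obtain c where c: "c > 0" "\<And>x y. x \<in> K \<Longrightarrow> y - x \<in> K \<Longrightarrow> norm x \<le> c * norm y"
    using nK unfolding normal_cone_def cone_le_def by force
  have Kadd: "x \<in> K \<Longrightarrow> y \<in> K \<Longrightarrow> x + y \<in> K" for x y using K_add[OF cK vK] .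
  have mono2: "u m - u n \<in> K" if "n \<le> m" for m n
    using that
  proof (induction m rule: dec_induct)
    case base then show ?case using K0 by simp
  next
    case (step m)
    have "(u (Suc m) - u m) + (u m - u n) \<in> K" using Kadd[OF mono[of m] step(3)] .
    moreover have "(u (Suc m) - u m) + (u m - u n) = u (Suc m) - u n" by simp
    ultimately show ?case by simp
  qed
  define d where "d k = u (Suc k) - u k" for k
  have wC: "weakly_Cauchy u" unfolding weakly_Cauchy_def
  proof (intro allI impI)
    fix f :: "'b \<Rightarrow> real" assume f: "bounded_linear f"
    have lf: "linear f" using f by (rule bounded_linear.linear)
    obtain M where M: "\<And>x. norm (f x) \<le> norm x * M" "M > 0" using bounded_linear.pos_bounded[OF f] by blast
    define R where "R = c * norm (B - u 0) * M"
    have SK: "sum d S \<in> K" for S by (rule K_sum[OF cK vK K0]) (simp add: d_def mono)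
    have Sb: "\<bar>sum (\<lambda>k. f (d k)) S\<bar> \<le> R" if S: "S \<subseteq> {..<N}" for S N
    proof -
      have fin: "finite S" using S finite_subset by blast
      have tel: "sum d {..<N} = u N - u 0" unfolding d_def by (rule sum_lessThan_telescope)
      have "sum d {..<N} = sum d S + sum d ({..<N} - S)"
        using S by (simp add: sum.subset_diff)
      then have "(B - u 0) - sum d S = (B - u N) + sum d ({..<N} - S)" using tel by (simp add: algebra_simps)
      then have "(B - u 0) - sum d S \<in> K" by (simp only:) (rule Kadd[OF bnd SK])
      then have n1: "norm (sum d S) \<le> c * norm (B - u 0)" using c(2)[OF SK] by blast
      have "\<bar>f (sum d S)\<bar> \<le> norm (sum d S) * M" using M(1) by simp
      also have "\<dots> \<le> c * norm (B - u 0) * M"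
      proof (rule mult_right_mono[OF n1])
        show "0 \<le> M" using M(2) by simp
      qed
      finally show ?thesis unfolding R_def by (simp add: linear_sum[OF lf])
    qed
    have abs_b: "(\<Sum>k<N. \<bar>f (d k)\<bar>) \<le> 2 * R" for N
    proof -
      have "(\<Sum>k<N. \<bar>f (d k)\<bar>) = (\<Sum>k<N. if f (d k) \<ge> 0 then f (d k) else 0) - (\<Sum>k<N. if f (d k) < 0 then f (d k) else 0)"
        by (simp add: sum_subtractf[symmetric]) (rule sum.cong, auto)
      also have "\<dots> = sum (\<lambda>k. f (d k)) {k\<in>{..<N}. f (d k) \<ge> 0} - sum (\<lambda>k. f (d k)) {k\<in>{..<N}. f (d k) < 0}"
        by (simp only: sum.inter_filter[OF finite_lessThan])
      also have "\<dots> \<le> R + R"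
      proof -
        have "{k\<in>{..<N}. f (d k) \<ge> 0} \<subseteq> {..<N}" "{k\<in>{..<N}. f (d k) < 0} \<subseteq> {..<N}" by auto
        from Sb[OF this(1)] Sb[OF this(2)] show ?thesis by (simp add: abs_le_iff)
      qed
      finally show ?thesis by simp
    qed
    have "summable (\<lambda>k. \<bar>f (d k)\<bar>)"
    proof (rule bounded_imp_summable)
      show "\<And>n. 0 \<le> \<bar>f (d n)\<bar>" by simp
      show "(\<Sum>k\<le>n. \<bar>f (d k)\<bar>) \<le> 2 * R" for n using abs_b[of "Suc n"] by (simp add: lessThan_Suc_atMost)
    qed
    then have "summable (\<lambda>k. f (d k))" by (rule summable_rabs_cancel)
    then have "(\<lambda>n. \<Sum>k<n. f (d k)) \<longlonglongrightarrow> (\<Sum>k. f (d k))" by (rule summable_LIMSEQ)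
    then have "(\<lambda>n. f (u 0) + (\<Sum>k<n. f (d k))) \<longlonglongrightarrow> f (u 0) + (\<Sum>k. f (d k))" by (rule tendsto_add[OF tendsto_const])
    moreover have "f (u 0) + (\<Sum>k<n. f (d k)) = f (u n)" for n
    proof -
      have "(\<Sum>k<n. f (d k)) = f (sum d {..<n})" by (simp add: linear_sum[OF lf])
      also have "\<dots> = f (u n) - f (u 0)" unfolding d_def sum_lessThan_telescope using linear_diff[OF lf] by simp
      finally show ?thesis by simp
    qed
    ultimately have "(\<lambda>n. f (u n)) \<longlonglongrightarrow> f (u 0) + (\<Sum>k. f (d k))" by simp
    then show "Cauchy (\<lambda>n. f (u n))" by (rule LIMSEQ_imp_Cauchy)
  qed
  then obtain y where y: "weakly_converges_to u y" using wsc unfolding weakly_sequentially_complete_def by blast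
  have inhull: "y \<in> closure (convex hull (u ` {n..}))" for n
  proof (rule ccontr)
    assume nin: "y \<notin> closure (convex hull (u ` {n..}))"
    have mem: "u m \<in> closure (convex hull (u ` {n..}))" if "m \<ge> n" for m
    proof -
      have "u m \<in> u ` {n..}" using that by simp
      then have "u m \<in> convex hull (u ` {n..})" by (rule hull_inc)
      then show ?thesis by (rule closure_subset[THEN subsetD])
    qed
    obtain f :: "'b\<Rightarrow>real" and \<theta> where f: "bounded_linear f" "\<theta> > 0"
        "\<forall>s\<in>closure (convex hull (u ` {n..})). f s \<le> f y - \<theta>"
      using sep_point[OF convex_closure[OF convex_convex_hull] closed_closure nin mem[OF order_refl]] by blast
    have le: "f (u m) \<le> f y - \<theta>" if "m \<ge> n" for m
      using f(3) mem[OF that] by blast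
    have "\<forall>g::'b\<Rightarrow>real. bounded_linear g \<longrightarrow> (\<lambda>n. g (u n)) \<longlonglongrightarrow> g y"
      using y unfolding weakly_converges_to_def .
    then have "(\<lambda>m. f (u m)) \<longlonglongrightarrow> f y" using f(1) by simp
    then have "\<forall>r>0. \<exists>N. \<forall>m\<ge>N. norm (f (u m) - f y) < r" by (simp only: LIMSEQ_iff)
    then obtain N where "\<forall>m\<ge>N. norm (f (u m) - f y) < \<theta>" using f(2) by blast
    then have "\<bar>f (u (max N n)) - f y\<bar> < \<theta>" by simp
    then show False using le[of "max N n"] by simp
  qed
  have yK: "y - u n \<in> K" for n
  proof -
    have "closure (convex hull (u ` {n..})) \<subseteq> (+) (u n) ` K"
    proof (rule closure_minimal)
      show "closed ((+) (u n) ` K)" using clK by (rule closed_translation)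
      show "convex hull u ` {n..} \<subseteq> (+) (u n) ` K"
      proof (rule hull_minimal)
        show "convex ((+) (u n) ` K)" using vK by simp
        show "u ` {n..} \<subseteq> (+) (u n) ` K"
        proof
          fix z assume "z \<in> u ` {n..}"
          then obtain m where "m \<ge> n" "z = u m" by auto
          then have "z = u n + (u m - u n)" "u m - u n \<in> K" using mono2 by auto
          then show "z \<in> (+) (u n) ` K" by blast
        qed
      qed
    qed
    then obtain k where "k \<in> K" "y = u n + k" using inhull[of n] by blast
    then show ?thesis by simp
  qed
  define P where "P = {z. \<exists>N. \<forall>m\<ge>N. u m - z \<in> K}"
  have hullP: "convex hull (u ` {0..}) \<subseteq> P"
  proof (rule hull_minimal)
    show "u ` {0..} \<subseteq> P" unfolding P_def using mono2 by blast
    show "convex P" unfolding convex_def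
    proof (intro ballI allI impI)
      fix z1 z2 a b assume z: "z1 \<in> P" "z2 \<in> P" and ab: "0 \<le> (a::real)" "0 \<le> b" "a + b = 1"
      obtain N1 N2 where N: "\<forall>m\<ge>N1. u m - z1 \<in> K" "\<forall>m\<ge>N2. u m - z2 \<in> K" using z unfolding P_def by blast
      have "u m - (a *\<^sub>R z1 + b *\<^sub>R z2) \<in> K" if "m \<ge> max N1 N2" for m
      proof -
        have um: "u m = a *\<^sub>R u m + b *\<^sub>R u m"
          using ab by (metis scaleR_add_left scaleR_one)
        have "a *\<^sub>R (u m - z1) + b *\<^sub>R (u m - z2) = (a *\<^sub>R u m + b *\<^sub>R u m) - (a *\<^sub>R z1 + b *\<^sub>R z2)"
          by (simp add: algebra_simps)
        then have "u m - (a *\<^sub>R z1 + b *\<^sub>R z2) = a *\<^sub>R (u m - z1) + b *\<^sub>R (u m - z2)"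
          using um by simp
        then show ?thesis using vK N that ab unfolding convex_def by simp
      qed
      then show "a *\<^sub>R z1 + b *\<^sub>R z2 \<in> P" unfolding P_def by blast
    qed
  qed
  have "u \<longlonglongrightarrow> y"
  proof (rule LIMSEQ_I)
    fix r :: real assume r: "r > 0"
    obtain z where z: "z \<in> convex hull (u ` {0..})" "dist z y < r / c"
      using inhull[of 0] r c(1) unfolding closure_approachable by (meson divide_pos_pos)
    obtain N where N: "\<forall>m\<ge>N. u m - z \<in> K" using hullP z(1) unfolding P_def by blast
    have "norm (u m - y) < r" if "m \<ge> N" for m
    proof -
      have "(y - z) - (y - u m) = u m - z" by simp
      then have "(y - z) - (y - u m) \<in> K" using N that by simp
      then have "norm (y - u m) \<le> c * norm (y - z)" by (rule c(2)[OF yK])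
      also have "\<dots> < c * (r / c)" using z(2) c(1) by (intro mult_strict_left_mono) (simp_all add: dist_norm norm_minus_commute)
      also have "\<dots> = r" using c(1) by simp
      finally show ?thesis by (simp add: norm_minus_commute)
    qed
    then show "\<exists>no. \<forall>n\<ge>no. norm (u n - y) < r" by blast
  qed
  then show ?thesis by blast
qed

lemma para_U:
  fixes F :: "'a::real_normed_vector \<Rightarrow> 'b::real_normed_vector"
  assumes cK: "cone K" and vK: "convex K" and k0: "k0 \<in> K" and C: "C \<ge> 0"
    and \<alpha>_nonneg: "\<forall>t\<ge>0. \<alpha> t \<ge> 0"
    and para: "strongly_paraconvex K \<alpha> k0 C A F"
    and x0: "x0 \<in> A" and h: "norm h = 1"
    and line: "\<forall>t. -\<delta>0 < t \<and> t < \<delta>0 \<longrightarrow> x0 + t *\<^sub>R h \<in> A"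
    and st: "0 < s" "s < t" "t < \<delta>0"
  shows "(1/t) *\<^sub>R (F (x0 + t *\<^sub>R h) - F x0) + (C * \<alpha> t / t) *\<^sub>R k0 - (1/s) *\<^sub>R (F (x0 + s *\<^sub>R h) - F x0) \<in> K"
proof -
  have A1: "x0 + t *\<^sub>R h \<in> A" using line st by simp
  define l where "l = s / t"
  have l: "l \<in> {0..1}" "l * t = s" "(1/s) * l = 1/t" using st by (auto simp: l_def)
  define m where "m = min l (1 - l)"
  have m: "0 \<le> m" "m \<le> l" using l by (auto simp: m_def)
  have P: "cone_le K (F (l *\<^sub>R (x0 + t *\<^sub>R h) + (1 - l) *\<^sub>R x0))
      (l *\<^sub>R F (x0 + t *\<^sub>R h) + (1 - l) *\<^sub>R F x0 + (C * min l (1 - l) * \<alpha> (norm ((x0 + t *\<^sub>R h) - x0))) *\<^sub>R k0)"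
    using para A1 x0 l(1) unfolding strongly_paraconvex_def by blast
  have pt: "l *\<^sub>R (x0 + t *\<^sub>R h) + (1 - l) *\<^sub>R x0 = x0 + s *\<^sub>R h"
  proof -
    have "l *\<^sub>R (x0 + t *\<^sub>R h) + (1 - l) *\<^sub>R x0 = x0 + (l * t) *\<^sub>R h" by (simp add: algebra_simps)
    then show ?thesis using l(2) by simp
  qed
  have nrm: "norm ((x0 + t *\<^sub>R h) - x0) = t" using h st by simp
  define a where "a = F (x0 + t *\<^sub>R h) - F x0"
  define bb where "bb = F (x0 + s *\<^sub>R h) - F x0"
  define X where "X = (C * m * \<alpha> t) *\<^sub>R k0"
  have "l *\<^sub>R F (x0 + t *\<^sub>R h) + (1 - l) *\<^sub>R F x0 + X - F (x0 + s *\<^sub>R h) \<in> K"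
    using P unfolding cone_le_def pt nrm X_def m_def .
  moreover have "l *\<^sub>R F (x0 + t *\<^sub>R h) + (1 - l) *\<^sub>R F x0 + X - F (x0 + s *\<^sub>R h) = l *\<^sub>R a - bb + X"
    unfolding a_def bb_def by (simp add: algebra_simps)
  ultimately have P1: "l *\<^sub>R a - bb + X \<in> K" by simp
  have P2: "(1/s) *\<^sub>R (l *\<^sub>R a - bb + X) \<in> K" using cK P1 st unfolding cone_def by simp
  have eq1: "(1/s) *\<^sub>R (l *\<^sub>R a - bb + X) = (1/t) *\<^sub>R a - (1/s) *\<^sub>R bb + (C * m * \<alpha> t / s) *\<^sub>R k0"
    unfolding X_def by (simp add: scaleR_add_right scaleR_diff_right l(3)[symmetric])
  have ge: "C * m * \<alpha> t / s \<le> C * \<alpha> t / t"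
  proof -
    have at: "\<alpha> t \<ge> 0" using \<alpha>_nonneg st by simp
    have "C * m * \<alpha> t / s \<le> C * l * \<alpha> t / s"
      using m C at st by (intro divide_right_mono mult_right_mono mult_left_mono) auto
    also have "\<dots> = C * \<alpha> t / t" using st by (simp add: l_def)
    finally show ?thesis .
  qed
  have P3: "(C * \<alpha> t / t - C * m * \<alpha> t / s) *\<^sub>R k0 \<in> K" using cK k0 ge unfolding cone_def by simp
  have "(1/t) *\<^sub>R a + (C * \<alpha> t / t) *\<^sub>R k0 - (1/s) *\<^sub>R bb
      = (1/s) *\<^sub>R (l *\<^sub>R a - bb + X) + (C * \<alpha> t / t - C * m * \<alpha> t / s) *\<^sub>R k0"
    unfolding eq1 by (simp add: algebra_simps)
  then show ?thesis using K_add[OF cK vK P2 P3] unfolding a_def bb_def by simp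
qed

lemma para_Lo:
  fixes F :: "'a::real_normed_vector \<Rightarrow> 'b::real_normed_vector"
  assumes cK: "cone K" and vK: "convex K" and k0: "k0 \<in> K" and C: "C \<ge> 0"
    and \<alpha>_nonneg: "\<forall>t\<ge>0. \<alpha> t \<ge> 0" and \<alpha>_mono: "mono_on {0..} \<alpha>"
    and para: "strongly_paraconvex K \<alpha> k0 C A F"
    and h: "norm h = 1"
    and line: "\<forall>t. -\<delta>0 < t \<and> t < \<delta>0 \<longrightarrow> x0 + t *\<^sub>R h \<in> A"
    and \<sigma>: "0 < \<sigma>" "\<sigma> < \<delta>0" and t: "0 < t" "t \<le> \<sigma>"
  shows "(1/t) *\<^sub>R (F (x0 + t *\<^sub>R h) - F x0) - ((1/\<sigma>) *\<^sub>R (F x0 - F (x0 + (-\<sigma>) *\<^sub>R h)) - (C * \<alpha> (2*\<sigma>) / \<sigma>) *\<^sub>R k0) \<in> K"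
proof -
  have A1: "x0 + (-\<sigma>) *\<^sub>R h \<in> A" using line[rule_format, of "-\<sigma>"] \<sigma> by simp
  have A2: "x0 + t *\<^sub>R h \<in> A" using line \<sigma> t by simp
  define l where "l = t / (\<sigma> + t)"
  have l: "l \<in> {0..1}" "1 - l = \<sigma> / (\<sigma> + t)" using \<sigma> t by (auto simp: l_def field_simps)
  define \<kappa> where "\<kappa> = (\<sigma> + t) / (\<sigma> * t)"
  have nz: "\<sigma> \<noteq> 0" "t \<noteq> 0" "\<sigma> + t \<noteq> 0" using \<sigma> t by auto
  have \<kappa>: "\<kappa> * l = 1/\<sigma>" "\<kappa> * (1 - l) = 1/t" "\<kappa> > 0"
    using nz l(2) \<sigma> t by (simp_all add: \<kappa>_def l_def)
  define m where "m = min l (1 - l)"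
  have m: "0 \<le> m" "m \<le> l" using l by (auto simp: m_def)
  have P: "cone_le K (F (l *\<^sub>R (x0 + (-\<sigma>) *\<^sub>R h) + (1 - l) *\<^sub>R (x0 + t *\<^sub>R h)))
      (l *\<^sub>R F (x0 + (-\<sigma>) *\<^sub>R h) + (1 - l) *\<^sub>R F (x0 + t *\<^sub>R h) + (C * min l (1 - l) * \<alpha> (norm ((x0 + (-\<sigma>) *\<^sub>R h) - (x0 + t *\<^sub>R h)))) *\<^sub>R k0)"
    using para A1 A2 l(1) unfolding strongly_paraconvex_def by blast
  have pt: "l *\<^sub>R (x0 + (-\<sigma>) *\<^sub>R h) + (1 - l) *\<^sub>R (x0 + t *\<^sub>R h) = x0"
  proof -
    have "l *\<^sub>R (x0 + (-\<sigma>) *\<^sub>R h) + (1 - l) *\<^sub>R (x0 + t *\<^sub>R h) = x0 + (- l * \<sigma> + (1 - l) * t) *\<^sub>R h"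
      by (simp add: algebra_simps)
    moreover have "- l * \<sigma> + (1 - l) * t = 0" using l(2) \<sigma> t by (simp add: l_def field_simps)
    ultimately show ?thesis by simp
  qed
  have nrm: "norm ((x0 + (-\<sigma>) *\<^sub>R h) - (x0 + t *\<^sub>R h)) = \<sigma> + t"
  proof -
    have "(x0 + (-\<sigma>) *\<^sub>R h) - (x0 + t *\<^sub>R h) = (- (\<sigma> + t)) *\<^sub>R h" by (simp add: algebra_simps)
    then show ?thesis using h \<sigma> t by simp
  qed
  define a where "a = F (x0 + t *\<^sub>R h) - F x0"
  define bb where "bb = F x0 - F (x0 + (-\<sigma>) *\<^sub>R h)"
  define X where "X = (C * m * \<alpha> (\<sigma> + t)) *\<^sub>R k0"
  have "l *\<^sub>R F (x0 + (-\<sigma>) *\<^sub>R h) + (1 - l) *\<^sub>R F (x0 + t *\<^sub>R h) + X - F x0 \<in> K"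
    using P unfolding cone_le_def pt nrm X_def m_def .
  moreover have "l *\<^sub>R F (x0 + (-\<sigma>) *\<^sub>R h) + (1 - l) *\<^sub>R F (x0 + t *\<^sub>R h) + X - F x0 = (1 - l) *\<^sub>R a - l *\<^sub>R bb + X"
    unfolding a_def bb_def by (simp add: algebra_simps)
  ultimately have P1: "(1 - l) *\<^sub>R a - l *\<^sub>R bb + X \<in> K" by (simp only:)
  have P2: "\<kappa> *\<^sub>R ((1 - l) *\<^sub>R a - l *\<^sub>R bb + X) \<in> K" using cK P1 \<kappa>(3) unfolding cone_def by simp
  have eq1: "\<kappa> *\<^sub>R ((1 - l) *\<^sub>R a - l *\<^sub>R bb + X) = (1/t) *\<^sub>R a - (1/\<sigma>) *\<^sub>R bb + (\<kappa> * (C * m * \<alpha> (\<sigma> + t))) *\<^sub>R k0"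
    unfolding X_def by (simp add: scaleR_add_right scaleR_diff_right \<kappa>(1)[symmetric] \<kappa>(2)[symmetric])
  have ge: "\<kappa> * (C * m * \<alpha> (\<sigma> + t)) \<le> C * \<alpha> (2*\<sigma>) / \<sigma>"
  proof -
    have at: "\<alpha> (\<sigma> + t) \<ge> 0" using \<alpha>_nonneg \<sigma> t by simp
    have am: "\<alpha> (\<sigma> + t) \<le> \<alpha> (2*\<sigma>)" using \<alpha>_mono \<sigma> t by (intro mono_onD[OF \<alpha>_mono]) auto
    have "\<kappa> * (C * m * \<alpha> (\<sigma> + t)) = C * (\<kappa> * m) * \<alpha> (\<sigma> + t)" by simp
    also have "\<dots> \<le> C * (\<kappa> * l) * \<alpha> (\<sigma> + t)"
      using m C at \<kappa>(3) by (intro mult_right_mono mult_left_mono) auto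
    also have "\<dots> \<le> C * (\<kappa> * l) * \<alpha> (2*\<sigma>)"
      using am C \<kappa>(3) l(1) by (intro mult_left_mono) auto
    also have "\<dots> = C * \<alpha> (2*\<sigma>) / \<sigma>" using \<kappa>(1) by simp
    finally show ?thesis .
  qed
  have P3: "(C * \<alpha> (2*\<sigma>) / \<sigma> - \<kappa> * (C * m * \<alpha> (\<sigma> + t))) *\<^sub>R k0 \<in> K" using cK k0 ge unfolding cone_def by simp
  have "(1/t) *\<^sub>R a - ((1/\<sigma>) *\<^sub>R bb - (C * \<alpha> (2*\<sigma>) / \<sigma>) *\<^sub>R k0)
      = \<kappa> *\<^sub>R ((1 - l) *\<^sub>R a - l *\<^sub>R bb + X) + (C * \<alpha> (2*\<sigma>) / \<sigma> - \<kappa> * (C * m * \<alpha> (\<sigma> + t))) *\<^sub>R k0"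
    unfolding eq1 by (simp add: algebra_simps)
  then show ?thesis using K_add[OF cK vK P2 P3] unfolding a_def bb_def by simp
qed

primrec ss :: "real \<Rightarrow> (nat \<Rightarrow> real) \<Rightarrow> nat \<Rightarrow> real" where
  "ss \<sigma> \<tau> 0 = min \<sigma> (\<tau> 0) / 2"
| "ss \<sigma> \<tau> (Suc n) = min (ss \<sigma> \<tau> n) (\<tau> (Suc n)) / 2"

lemma ss_props:
  assumes "\<sigma> > 0" "\<forall>n. \<tau> n > 0"
  shows "ss \<sigma> \<tau> n > 0 \<and> ss \<sigma> \<tau> (Suc n) < ss \<sigma> \<tau> n \<and> ss \<sigma> \<tau> n < \<tau> n \<and> ss \<sigma> \<tau> n \<le> \<sigma> * (1/2)^(Suc n)"
proof (induction n)
  case 0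
  have "min \<sigma> (\<tau> 0) / 2 > 0" using assms by simp
  moreover have "min (min \<sigma> (\<tau> 0) / 2) (\<tau> (Suc 0)) / 2 < min \<sigma> (\<tau> 0) / 2"
  proof -
    have "min (min \<sigma> (\<tau> 0) / 2) (\<tau> (Suc 0)) \<le> min \<sigma> (\<tau> 0) / 2" by (rule min.cobounded1)
    moreover have "min \<sigma> (\<tau> 0) / 2 > 0" using assms by simp
    ultimately show ?thesis by linarith
  qed
  moreover have "min \<sigma> (\<tau> 0) / 2 < \<tau> 0" using assms(2)[rule_format, of 0] by (simp add: min_def)
  moreover have "min \<sigma> (\<tau> 0) / 2 \<le> \<sigma> * (1/2)" by simp
  ultimately show ?case by simp
next
  case (Suc n)
  let ?a = "ss \<sigma> \<tau> n"
  have a: "?a > 0" "?a \<le> \<sigma> * (1/2)^(Suc n)" using Suc by auto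
  have 1: "ss \<sigma> \<tau> (Suc n) > 0" using a assms(2)[rule_format, of "Suc n"] by simp
  have 2: "ss \<sigma> \<tau> (Suc (Suc n)) < ss \<sigma> \<tau> (Suc n)"
  proof -
    have "min (ss \<sigma> \<tau> (Suc n)) (\<tau> (Suc (Suc n))) \<le> ss \<sigma> \<tau> (Suc n)" by (rule min.cobounded1)
    then show ?thesis using 1 by simp
  qed
  have 3: "ss \<sigma> \<tau> (Suc n) < \<tau> (Suc n)" using assms(2)[rule_format, of "Suc n"] by (simp add: min_def)
  have "ss \<sigma> \<tau> (Suc n) \<le> ?a / 2" by simp
  also have "\<dots> \<le> \<sigma> * (1/2)^(Suc n) / 2" using a by simp
  also have "\<dots> = \<sigma> * (1/2)^(Suc (Suc n))" by simp
  finally show ?case using 1 2 3 by simp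
qed

lemma tri3: "norm (a + b + c) \<le> norm a + norm b + norm (c::'b::real_normed_vector)"
  by (smt (verit) norm_triangle_ineq)

theorem theorem4p2:
  fixes K :: "'b::banach set" and F :: "'a::real_normed_vector \<Rightarrow> 'b"
    and \<alpha> :: "real \<Rightarrow> real" and A :: "'a set" and k0 :: 'b and C :: real
    and x0 h :: 'a and \<delta>0 :: real
  assumes wsc: "weakly_sequentially_complete TYPE('b)"
    and K_cone: "cone K" and K_convex: "convex K" and K_closed: "closed K"
    and K_normal: "normal_cone K"
    and \<alpha>_nonneg: "\<forall>t\<ge>0. \<alpha> t \<ge> 0"
    and \<alpha>_mono: "mono_on {0..} \<alpha>"
    and \<alpha>_lim: "((\<lambda>t. \<alpha> t / t) \<longlongrightarrow> 0) (at_right 0)"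
    and A_convex: "convex A"
    and k0: "k0 \<in> K" "k0 \<noteq> 0"
    and C: "C \<ge> 0"
    and para: "strongly_paraconvex K \<alpha> k0 C A F"
    and x0: "x0 \<in> A"
    and h: "norm h = 1"
    and \<delta>0: "\<delta>0 > 0"
    and line: "\<forall>t. -\<delta>0 < t \<and> t < \<delta>0 \<longrightarrow> x0 + t *\<^sub>R h \<in> A"
  shows "\<exists>L. ((\<lambda>t. (1 / t) *\<^sub>R (F (x0 + t *\<^sub>R h) - F x0)) \<longlongrightarrow> L) (at_right 0)"
proof -
  define q where "q t = (1 / t) *\<^sub>R (F (x0 + t *\<^sub>R h) - F x0)" for t
  define e where "e t = C * \<alpha> t / t" for t
  have Ksc: "a \<ge> 0 \<Longrightarrow> a *\<^sub>R k0 \<in> K" for a using K_cone k0(1) unfolding cone_def by blast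
  have K0: "0 \<in> K" using Ksc[of 0] by simp
  have Kadd: "x \<in> K \<Longrightarrow> y \<in> K \<Longrightarrow> x + y \<in> K" for x y using K_add[OF K_cone K_convex] .
  have U: "q t + e t *\<^sub>R k0 - q s \<in> K" if "0 < s" "s < t" "t < \<delta>0" for s t
    using para_U[OF K_cone K_convex k0(1) C \<alpha>_nonneg para x0 h line that] unfolding q_def e_def .
  define \<sigma> where "\<sigma> = \<delta>0 / 2"
  have \<sigma>: "0 < \<sigma>" "\<sigma> < \<delta>0" using \<delta>0 by (auto simp: \<sigma>_def)
  define b where "b = (1/\<sigma>) *\<^sub>R (F x0 - F (x0 + (-\<sigma>) *\<^sub>R h)) - (C * \<alpha> (2*\<sigma>) / \<sigma>) *\<^sub>R k0"
  have Lo: "q t - b \<in> K" if "0 < t" "t \<le> \<sigma>" for t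
    using para_Lo[OF K_cone K_convex k0(1) C \<alpha>_nonneg \<alpha>_mono para h line \<sigma> that] unfolding q_def b_def .
  have e_nn: "t > 0 \<Longrightarrow> e t \<ge> 0" for t using C \<alpha>_nonneg by (simp add: e_def)
  have e_lim: "(e \<longlongrightarrow> 0) (at_right 0)"
  proof -
    have "((\<lambda>t. C * (\<alpha> t / t)) \<longlongrightarrow> 0) (at_right 0)" by (rule tendsto_mult_right_zero[OF \<alpha>_lim])
    moreover have "(\<lambda>t. C * (\<alpha> t / t)) = e" unfolding e_def by auto
    ultimately show ?thesis by simp
  qed
  have ev: "\<exists>\<eta>>0. \<forall>t. 0 < t \<and> t < \<eta> \<longrightarrow> e t < \<epsilon>" if "\<epsilon> > 0" for \<epsilon>
  proof -
    have "eventually (\<lambda>t. dist (e t) 0 < \<epsilon>) (at_right 0)" using e_lim that unfolding tendsto_iff by blast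
    then obtain \<eta> where "\<eta> > 0" "\<forall>t>0. t < \<eta> \<longrightarrow> dist (e t) 0 < \<epsilon>" unfolding eventually_at_right_field by auto
    then have "\<forall>t. 0 < t \<and> t < \<eta> \<longrightarrow> e t < \<epsilon>" by (auto simp: dist_real_def abs_less_iff)
    then show ?thesis using \<open>\<eta> > 0\<close> by blast
  qed
  have "\<forall>n. \<exists>\<eta>. \<eta> > 0 \<and> (\<forall>t. 0 < t \<and> t < \<eta> \<longrightarrow> e t < (1/2)^n)" using ev by simp
  then obtain \<tau> where \<tau>: "\<And>n. \<tau> n > 0" "\<And>n t. 0 < t \<Longrightarrow> t < \<tau> n \<Longrightarrow> e t < (1/2)^n"
    using choice[of "\<lambda>n \<eta>. \<eta> > 0 \<and> (\<forall>t. 0 < t \<and> t < \<eta> \<longrightarrow> e t < (1/2)^n)"] by blast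
  define s where "s = ss \<sigma> \<tau>"
  have sp: "s n > 0" "s (Suc n) < s n" "s n < \<tau> n" "s n \<le> \<sigma> * (1/2)^(Suc n)" for n
  proof -
    have "\<forall>n. \<tau> n > 0" using \<tau>(1) by blast
    from ss_props[OF \<sigma>(1) this, of n] show "s n > 0" "s (Suc n) < s n" "s n < \<tau> n" "s n \<le> \<sigma> * (1/2)^(Suc n)"
      unfolding s_def by blast+
  qed
  have s_le: "s n \<le> \<sigma>" for n
  proof -
    have "(1/2::real)^(Suc n) \<le> 1" by (rule power_le_one) auto
    then have "\<sigma> * (1/2)^(Suc n) \<le> \<sigma>" using \<sigma> by (simp add: mult_left_le)
    then show ?thesis using sp(4)[of n] by simp
  qed
  have s_lim: "s \<longlonglongrightarrow> 0"
  proof (rule tendsto_sandwich[of "\<lambda>n. 0" _ _ "\<lambda>n. \<sigma> * (1/2)^(Suc n)"])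
    show "\<forall>\<^sub>F n in sequentially. 0 \<le> s n" by (rule always_eventually) (simp add: less_imp_le sp(1))
    show "\<forall>\<^sub>F n in sequentially. s n \<le> \<sigma> * (1/2)^(Suc n)" by (rule always_eventually) (use sp(4) in blast)
    show "(\<lambda>n. 0) \<longlonglongrightarrow> (0::real)" by simp
    have "(\<lambda>n. (1/2::real)^(Suc n)) \<longlonglongrightarrow> 0"
      using LIMSEQ_Suc[OF LIMSEQ_realpow_zero[of "1/2::real"]] by simp
    then show "(\<lambda>n. \<sigma> * (1/2)^(Suc n)) \<longlonglongrightarrow> 0" by (rule tendsto_mult_right_zero)
  qed
  define E where "E n = e (s n)" for n
  have E_nn: "E n \<ge> 0" for n using e_nn sp(1) by (simp add: E_def)
  have E_le: "E n < (1/2)^n" for n using \<tau>(2)[OF sp(1) sp(3)] by (simp add: E_def)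
  have sumE: "summable E"
  proof (rule summable_comparison_test)
    have "norm (E n) \<le> (1/2)^n" for n using E_nn[of n] E_le[of n] by simp
    then show "\<exists>N. \<forall>n\<ge>N. norm (E n) \<le> (1/2)^n" by blast
    show "summable (\<lambda>n. (1/2::real)^n)" by (rule summable_geometric) simp
  qed
  define SE where "SE n = sum E {..<n}" for n
  have SE_le: "SE n \<le> suminf E" for n unfolding SE_def using sum_le_suminf[OF sumE] E_nn by simp
  define u where "u n = - (q (s n) - SE n *\<^sub>R k0)" for n
  have mono: "u (Suc n) - u n \<in> K" for n
  proof -
    have "u (Suc n) - u n = q (s n) + E n *\<^sub>R k0 - q (s (Suc n))"
      by (simp add: u_def SE_def algebra_simps)
    moreover have "q (s n) + e (s n) *\<^sub>R k0 - q (s (Suc n)) \<in> K"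
      using U[OF sp(1) sp(2), of n] s_le[of n] \<sigma>(2) by simp
    ultimately show ?thesis by (simp add: E_def)
  qed
  define B where "B = - (b - suminf E *\<^sub>R k0)"
  have bnd: "B - u n \<in> K" for n
  proof -
    have "B - u n = (q (s n) - b) + (suminf E - SE n) *\<^sub>R k0"
      by (simp add: B_def u_def algebra_simps)
    moreover have "q (s n) - b \<in> K" using Lo[OF sp(1) s_le] .
    moreover have "(suminf E - SE n) *\<^sub>R k0 \<in> K" using Ksc SE_le by simp
    ultimately show ?thesis using Kadd by simp
  qed
  obtain L0 where L0: "u \<longlonglongrightarrow> L0"
    using regular[where u=u and B=B, OF wsc K_cone K_convex K_closed K_normal K0 mono bnd] by blast
  define L where "L = - L0 + suminf E *\<^sub>R k0"
  have qs_lim: "(\<lambda>n. q (s n)) \<longlonglongrightarrow> L"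
  proof -
    have "(\<lambda>n. - u n + SE n *\<^sub>R k0) \<longlonglongrightarrow> L"
      unfolding L_def SE_def
      by (rule tendsto_add[OF tendsto_minus[OF L0] tendsto_scaleR[OF summable_LIMSEQ[OF sumE] tendsto_const]])
    moreover have "- u n + SE n *\<^sub>R k0 = q (s n)" for n by (simp add: u_def)
    ultimately show ?thesis by simp
  qed
  have E_lim: "E \<longlonglongrightarrow> 0" using summable_LIMSEQ_zero[OF sumE] .
  obtain c where c: "c > 0" "\<And>x y. x \<in> K \<Longrightarrow> y - x \<in> K \<Longrightarrow> norm x \<le> c * norm y"
    using K_normal unfolding normal_cone_def cone_le_def by force
  have "(q \<longlongrightarrow> L) (at_right 0)"
    unfolding tendsto_iff eventually_at_right_field
  proof (intro allI impI)
    fix \<epsilon> :: real assume \<epsilon>: "\<epsilon> > 0"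
    define nk where "nk = norm k0"
    define \<beta> where "\<beta> = \<epsilon> / (2 * (2*c+1) * (1 + nk))"
    have nk: "nk \<ge> 0" by (simp add: nk_def)
    have \<beta>: "\<beta> > 0" using \<epsilon> c nk by (simp add: \<beta>_def)
    have \<beta>eq: "(2*c+1) * (1 + nk) * \<beta> = \<epsilon> / 2"
    proof -
      define D where "D = (2*c+1) * (1 + nk)"
      have "D > 0" using c nk by (simp add: D_def)
      have "\<beta> = \<epsilon> / (2 * D)" by (simp add: \<beta>_def D_def mult.assoc)
      then have "D * \<beta> = \<epsilon> / 2" using \<open>D > 0\<close> by simp
      then show ?thesis by (simp add: D_def)
    qed
    obtain N1 where N1: "\<forall>n\<ge>N1. norm (q (s n) - L) < \<beta>" using qs_lim \<beta> unfolding LIMSEQ_iff by blast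
    obtain N2 where N2: "\<forall>n\<ge>N2. norm (E n - 0) < \<beta>" using E_lim \<beta> unfolding LIMSEQ_iff by blast
    define n where "n = max N1 N2"
    have n: "norm (q (s n) - L) < \<beta>" "E n < \<beta>" using N1 N2 by (auto simp: n_def abs_less_iff)
    obtain \<eta>0 where \<eta>0: "\<eta>0 > 0" "\<forall>t. 0 < t \<and> t < \<eta>0 \<longrightarrow> e t < \<beta>" using ev[OF \<beta>] by blast
    define \<eta> where "\<eta> = min (s n) \<eta>0"
    have "\<eta> > 0" using sp(1) \<eta>0 by (simp add: \<eta>_def)
    moreover have "dist (q t) L < \<epsilon>" if t: "0 < t" "t < \<eta>" for t
    proof -
      obtain M1 where M1: "\<forall>m\<ge>M1. norm (s m - 0) < t" using s_lim t unfolding LIMSEQ_iff by blast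
      define m where "m = max M1 N1"
      have m: "s m < t" "norm (q (s m) - L) < \<beta>" using M1 N1 sp(1)[of m] by (auto simp: m_def abs_less_iff)
      have tn: "t < s n" "t < \<eta>0" using t by (auto simp: \<eta>_def)
      have snd: "s n < \<delta>0" using s_le[of n] \<sigma>(2) by simp
      have et: "e t < \<beta>" "e t \<ge> 0" using \<eta>0(2) t tn e_nn by auto
      define x where "x = q t - q (s m) + e t *\<^sub>R k0"
      define y where "y = q (s n) - q (s m) + (E n + e t) *\<^sub>R k0"
      have xK: "x \<in> K" using U[OF sp(1) m(1)] tn snd unfolding x_def
        by (simp add: algebra_simps)
      have "y - x = q (s n) + E n *\<^sub>R k0 - q t" by (simp add: x_def y_def algebra_simps)
      moreover have "q (s n) + e (s n) *\<^sub>R k0 - q t \<in> K" using U[OF t(1) tn(1) snd] .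
      ultimately have yxK: "y - x \<in> K" by (simp add: E_def)
      have nx: "norm x \<le> c * norm y" using c(2)[OF xK yxK] .
      have "y = (q (s n) - L) + (L - q (s m)) + (E n + e t) *\<^sub>R k0" by (simp add: y_def)
      then have "norm y \<le> norm (q (s n) - L) + norm (L - q (s m)) + norm ((E n + e t) *\<^sub>R k0)"
        using tri3 by metis
      also have "norm ((E n + e t) *\<^sub>R k0) = (E n + e t) * nk" using E_nn et by (simp add: nk_def)
      also have "norm (L - q (s m)) = norm (q (s m) - L)" by (rule norm_minus_commute)
      finally have "norm y \<le> norm (q (s n) - L) + norm (q (s m) - L) + (E n + e t) * nk" .
      also have "\<dots> \<le> \<beta> + \<beta> + (\<beta> + \<beta>) * nk"
        using n m et nk by (intro add_mono mult_right_mono) auto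
      finally have ny: "norm y \<le> 2 * \<beta> * (1 + nk)" by (simp add: algebra_simps)
      have "q t - L = x + (q (s m) - L) + (- (e t *\<^sub>R k0))" by (simp add: x_def)
      then have "norm (q t - L) \<le> norm x + norm (q (s m) - L) + norm (- (e t *\<^sub>R k0))"
        using tri3 by metis
      also have "norm (- (e t *\<^sub>R k0)) = e t * nk" using et by (simp add: nk_def)
      finally have "norm (q t - L) \<le> norm x + norm (q (s m) - L) + e t * nk" .
      also have "\<dots> \<le> c * (2 * \<beta> * (1 + nk)) + \<beta> + \<beta> * nk"
        using nx ny c m et nk by (intro add_mono mult_right_mono) (auto intro: order_trans mult_left_mono)
      also have "\<dots> = (2*c+1) * (1 + nk) * \<beta>" by (simp add: algebra_simps)
      also have "\<dots> = \<epsilon> / 2" by (rule \<beta>eq)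
      also have "\<dots> < \<epsilon>" using \<epsilon> by simp
      finally show ?thesis by (simp add: dist_norm)
    qed
    ultimately show "\<exists>b>0. \<forall>y>0. y < b \<longrightarrow> dist (q y) L < \<epsilon>" by blast
  qed
  moreover have "(\<lambda>t. (1 / t) *\<^sub>R (F (x0 + t *\<^sub>R h) - F x0)) = q" unfolding q_def by simp
  ultimately show ?thesis by auto
qed

end
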